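(* Let $A,B\in\mathbb{R}^{m\times n}$ with $m<n$ and $b\in\mathbb{R}^m$, and let $1\le p\le\infty$. Let $B = M_B - N_B$ with $\operatorname{rank}(M_B) =m$. If $M_B^\dagger b\leq0$, $M_B^\dagger (N_B + A) \geq 0$ and $\|M_B^\dagger (N_B + A)\|_p <1$, then the equation $Ax-B|x|=b$ has at least one nonnegative solution.
   Context: $M^\dagger$ is the Moore–Penrose inverse; $|x|$ is the entrywise absolute value; vector/matrix inequalities are entrywise; $\|\cdot\|_p$ on matrices is the operator norm induced by the vector $p$-norm. *)

theory Defs
  imports "HOL-Analysis.Analysis"
begin

definition moore_penrose :: "real^'n^'m \<Rightarrow> real^'m^'n" where
  "moore_penrose A = (THE X. A ** X ** A = A \<and> X ** A ** X = X \<and>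
       transpose (A ** X) = A ** X \<and> transpose (X ** A) = X ** A)"

definition vec_pnorm :: "ereal \<Rightarrow> real^'n \<Rightarrow> real" where
  "vec_pnorm p x = (if p = \<infinity> then Max (range (\<lambda>i. \<bar>x $ i\<bar>))
     else (\<Sum>i\<in>UNIV. \<bar>x $ i\<bar> powr real_of_ereal p) powr (1 / real_of_ereal p))"

definition mat_pnorm :: "ereal \<Rightarrow> real^'n^'m \<Rightarrow> real" where
  "mat_pnorm p M = Sup {vec_pnorm p (M *v x) / vec_pnorm p x | x. x \<noteq> 0}"

end

theory Submission
  imports Defs
begin


lemma mp_unique:
  fixes A :: "real^'n^'m" and X Y :: "real^'m^'n"
  assumes x1: "A ** X ** A = A" and x2: "X ** A ** X = X" and x3: "transpose (A ** X) = A ** X"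
      and x4: "transpose (X ** A) = X ** A"
  and y1: "A ** Y ** A = A" and y2: "Y ** A ** Y = Y" and y3: "transpose (A ** Y) = A ** Y"
      and y4: "transpose (Y ** A) = Y ** A"
  shows "X = Y"
proof -
  have "X = X ** (A ** X)" using x2 by (simp add: matrix_mul_assoc)
  also have "\<dots> = X ** transpose (A ** X)" using x3 by simp
  also have "\<dots> = X ** transpose X ** transpose A" by (simp add: matrix_transpose_mul matrix_mul_assoc)
  also have "\<dots> = X ** transpose X ** transpose (A ** Y ** A)" using y1 by simp
  also have "\<dots> = X ** transpose (A ** X) ** transpose (A ** Y)" by (simp add: matrix_transpose_mul matrix_mul_assoc)
  also have "\<dots> = X ** A ** X ** A ** Y" using x3 y3 by (simp add: matrix_mul_assoc)
  also have "\<dots> = X ** A ** Y" using x2 by simp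
  finally have X: "X = X ** A ** Y" .
  have "Y = (Y ** A) ** Y" using y2 by simp
  also have "\<dots> = transpose (Y ** A) ** Y" using y4 by simp
  also have "\<dots> = transpose A ** transpose Y ** Y" by (simp add: matrix_transpose_mul matrix_mul_assoc)
  also have "\<dots> = transpose (A ** X ** A) ** transpose Y ** Y" using x1 by simp
  also have "\<dots> = transpose (X ** A) ** transpose (Y ** A) ** Y" by (simp add: matrix_transpose_mul matrix_mul_assoc)
  also have "\<dots> = X ** A ** (Y ** A ** Y)" using x4 y4 by (simp add: matrix_mul_assoc)
  also have "\<dots> = X ** A ** Y" using y2 by simp
  finally show ?thesis using X by simp
qed

lemma mp_right_inverse:
  fixes M :: "real^'n^'m"
  assumes surj: "surj ((*v) M)"
  shows "M ** moore_penrose M = mat 1"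
proof -
  let ?T = "transpose M"
  let ?S = "M ** ?T"
  have inj: "\<forall>y. ?S *v y = 0 \<longrightarrow> y = 0"
  proof (intro allI impI)
    fix y assume h: "?S *v y = 0"
    have "inner y (M *v (?T *v y)) = 0" using h by (metis matrix_vector_mul_assoc inner_zero_right)
    hence "inner (?T *v y) (?T *v y) = 0"
      by (metis dot_lmul_matrix transpose_matrix_vector)
    hence t0: "?T *v y = 0" by simp
    obtain z where z: "y = M *v z" using surj by (metis surjD)
    have "inner y y = inner (z v* ?T) y" using z by (metis transpose_matrix_vector transpose_transpose)
    also have "\<dots> = inner z (?T *v y)" by (rule dot_lmul_matrix)
    finally show "y = 0" using t0 by simp
  qed
  then obtain G where G: "G ** ?S = mat 1" using matrix_left_invertible_ker by blast
  hence G2: "?S ** G = mat 1" using matrix_left_right_inverse by blast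
  have St: "transpose ?S = ?S" by (simp add: matrix_transpose_mul)
  have "transpose G ** ?S = mat 1" using arg_cong[OF G2, of transpose] St
    by (simp add: matrix_transpose_mul)
  hence Gs: "transpose G = G"
    by (metis G2 matrix_mul_assoc matrix_mul_lid matrix_mul_rid)
  define X where "X = ?T ** G"
  have MX: "M ** X = mat 1" unfolding X_def using G2 by (simp add: matrix_mul_assoc)
  have p1: "M ** X ** M = M" using MX by simp
  have p2: "X ** M ** X = X" using MX by (simp add: matrix_mul_assoc[symmetric])
  have p3: "transpose (M ** X) = M ** X" using MX by simp
  have p4: "transpose (X ** M) = X ** M" unfolding X_def
    by (simp add: matrix_transpose_mul Gs matrix_mul_assoc)
  have ex: "\<exists>!X. M ** X ** M = M \<and> X ** M ** X = X \<and>
       transpose (M ** X) = M ** X \<and> transpose (X ** M) = X ** M"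
    using p1 p2 p3 p4 mp_unique[of M] by blast
  have "M ** moore_penrose M ** M = M"
    using theI'[OF ex] unfolding moore_penrose_def by blast
  show ?thesis
  proof (rule matrix_eq[THEN iffD2], intro allI)
    fix y obtain z where z: "y = M *v z" using surj by (metis surjD)
    show "(M ** moore_penrose M) *v y = mat 1 *v y"
      using z \<open>M ** moore_penrose M ** M = M\<close> by (metis matrix_vector_mul_assoc matrix_vector_mul_lid)
  qed
qed


definition mx :: "real^'n \<Rightarrow> real" where "mx x = Max (range (\<lambda>i. \<bar>x $ i\<bar>))"

lemma mx_ge: "\<bar>x $ i\<bar> \<le> mx x" unfolding mx_def by (rule Max_ge) auto
lemma mx_in: "\<exists>j. mx x = \<bar>x $ j\<bar>"
proof -
  have "mx x \<in> range (\<lambda>i. \<bar>x $ i\<bar>)" unfolding mx_def by (rule Max_in) auto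
  thus ?thesis by auto
qed
lemma mx_nonneg: "0 \<le> mx x" using mx_ge[of x] by (meson abs_ge_zero order_trans)

lemma pfin: assumes "1 \<le> p" "p \<noteq> \<infinity>" shows "p = ereal (real_of_ereal p)" "1 \<le> real_of_ereal p"
  using assms by (cases p; auto)+

lemma vp_inf: "vec_pnorm \<infinity> x = mx x" unfolding vec_pnorm_def mx_def by simp
lemma vp_fin: "p \<noteq> \<infinity> \<Longrightarrow> vec_pnorm p x = (\<Sum>i\<in>UNIV. \<bar>x $ i\<bar> powr real_of_ereal p) powr (1 / real_of_ereal p)"
  unfolding vec_pnorm_def by simp

lemma vp_lower: assumes "1 \<le> p" shows "mx x \<le> vec_pnorm p x"
proof (cases "p = \<infinity>")
  case True thus ?thesis by (simp add: vp_inf)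
next
  case False
  define r where "r = real_of_ereal p"
  have r1: "1 \<le> r" using pfin[OF assms False] r_def by simp
  obtain j where j: "mx x = \<bar>x $ j\<bar>" using mx_in by blast
  have "\<bar>x $ j\<bar> = (\<bar>x $ j\<bar> powr r) powr (1/r)" using r1 by (simp add: powr_powr)
  also have "\<dots> \<le> (\<Sum>i\<in>UNIV. \<bar>x $ i\<bar> powr r) powr (1/r)"
    by (rule powr_mono2) (use r1 in \<open>auto intro: member_le_sum\<close>)
  finally show ?thesis unfolding vp_fin[OF False] using j r_def by simp
qed

lemma vp_upper: assumes "1 \<le> p" shows "vec_pnorm p (x::real^'n) \<le> real CARD('n) * mx x"
proof (cases "p = \<infinity>")
  case True
  have c1: "1 \<le> real CARD('n)" by (simp add: Suc_leI)
  have "mx x \<le> real CARD('n) * mx x" using mult_right_mono[OF c1 mx_nonneg[of x]] by simp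
  thus ?thesis using True by (simp add: vp_inf)
next
  case False
  define r where "r = real_of_ereal p"
  have r1: "1 \<le> r" using pfin[OF assms False] r_def by simp
  have c1: "1 \<le> real CARD('n)" by (simp add: Suc_leI)
  have "(\<Sum>i\<in>UNIV. \<bar>x $ i\<bar> powr r) \<le> (\<Sum>i\<in>(UNIV::'n set). mx x powr r)"
    by (rule sum_mono, rule powr_mono2) (use r1 mx_ge in auto)
  also have "\<dots> = real CARD('n) * mx x powr r" by simp
  finally have S: "(\<Sum>i\<in>UNIV. \<bar>x $ i\<bar> powr r) \<le> real CARD('n) * mx x powr r" .
  have "(\<Sum>i\<in>UNIV. \<bar>x $ i\<bar> powr r) powr (1/r) \<le> (real CARD('n) * mx x powr r) powr (1/r)"
    by (rule powr_mono2[OF _ _ S]) (use r1 in \<open>auto intro!: sum_nonneg\<close>)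
  also have "\<dots> = real CARD('n) powr (1/r) * mx x"
    using r1 mx_nonneg[of x] by (simp add: powr_mult powr_powr)
  also have "\<dots> \<le> real CARD('n) * mx x"
  proof (rule mult_right_mono[OF _ mx_nonneg])
    have "real CARD('n) powr (1/r) \<le> real CARD('n) powr 1"
      by (rule powr_mono) (use r1 c1 in auto)
    thus "real CARD('n) powr (1/r) \<le> real CARD('n)" by simp
  qed
  finally show ?thesis unfolding vp_fin[OF False] using r_def by simp
qed

lemma vp_mono: assumes "1 \<le> p" "\<forall>i. \<bar>y $ i\<bar> \<le> \<bar>z $ i\<bar>" shows "vec_pnorm p y \<le> vec_pnorm p z"
proof (cases "p = \<infinity>")
  case True
  obtain j where j: "mx y = \<bar>y $ j\<bar>" using mx_in by blast
  thus ?thesis using True assms(2) mx_ge[of z j] by (simp add: vp_inf) (meson order_trans)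
next
  case False
  define r where "r = real_of_ereal p"
  have r1: "1 \<le> r" using pfin[OF assms(1) False] r_def by simp
  have "(\<Sum>i\<in>UNIV. \<bar>y $ i\<bar> powr r) \<le> (\<Sum>i\<in>UNIV. \<bar>z $ i\<bar> powr r)"
    by (rule sum_mono, rule powr_mono2) (use r1 assms(2) in auto)
  note S = this
  have "(\<Sum>i\<in>UNIV. \<bar>y $ i\<bar> powr r) powr (1/r) \<le> (\<Sum>i\<in>UNIV. \<bar>z $ i\<bar> powr r) powr (1/r)"
    by (rule powr_mono2[OF _ _ S]) (use r1 in \<open>auto intro!: sum_nonneg\<close>)
  thus ?thesis unfolding vp_fin[OF False] using r_def by simp
qed

lemma vp_nonneg: "0 \<le> vec_pnorm p x"
  unfolding vec_pnorm_def using mx_nonneg[of x] by (simp add: mx_def)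

lemma vp_pos: assumes "1 \<le> p" "x \<noteq> 0" shows "0 < vec_pnorm p x"
proof -
  obtain i where "x $ i \<noteq> 0" using assms(2) by (metis vec_eq_iff zero_index)
  hence "0 < mx x" using mx_ge[of x i] by simp
  thus ?thesis using vp_lower[OF assms(1)] by (meson less_le_trans)
qed



lemma mv_comp: "(C *v x) $ i = (\<Sum>j\<in>UNIV. C $ i $ j * x $ j)"
  by (simp add: matrix_vector_mult_def)

lemma ratio_bdd:
  fixes C :: "real^'n^'k"
  assumes p: "1 \<le> p"
  shows "bdd_above {vec_pnorm p (C *v x) / vec_pnorm p x | x. x \<noteq> 0}"
proof -
  define K where "K = (\<Sum>i\<in>UNIV. \<Sum>j\<in>UNIV. \<bar>C $ i $ j\<bar>)"
  have K0: "0 \<le> K" unfolding K_def by (auto intro!: sum_nonneg)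
  have mxC: "mx (C *v x) \<le> K * mx x" for x
  proof -
    obtain i where i: "mx (C *v x) = \<bar>(C *v x) $ i\<bar>" using mx_in by blast
    have "\<bar>(C *v x) $ i\<bar> \<le> (\<Sum>j\<in>UNIV. \<bar>C $ i $ j * x $ j\<bar>)" unfolding mv_comp by (rule sum_abs)
    also have "\<dots> \<le> (\<Sum>j\<in>UNIV. \<bar>C $ i $ j\<bar> * mx x)"
      by (rule sum_mono) (simp add: abs_mult mult_left_mono mx_ge)
    also have "\<dots> = (\<Sum>j\<in>UNIV. \<bar>C $ i $ j\<bar>) * mx x" by (simp add: sum_distrib_right)
    also have "\<dots> \<le> K * mx x" unfolding K_def
      by (rule mult_right_mono[OF _ mx_nonneg], rule member_le_sum) (auto intro!: sum_nonneg)
    finally show ?thesis using i by simp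
  qed
  show ?thesis
  proof (rule bdd_aboveI[where M = "real CARD('k) * K"], clarify)
    fix x :: "real^'n" assume "x \<noteq> 0"
    hence pos: "0 < vec_pnorm p x" using vp_pos[OF p] by blast
    have "vec_pnorm p (C *v x) \<le> real CARD('k) * mx (C *v x)" by (rule vp_upper[OF p])
    also have "\<dots> \<le> real CARD('k) * (K * mx x)" by (rule mult_left_mono[OF mxC]) simp
    also have "\<dots> \<le> real CARD('k) * (K * vec_pnorm p x)"
      using vp_lower[OF p, of x] K0 by (simp add: mult_left_mono)
    finally show "vec_pnorm p (C *v x) / vec_pnorm p x \<le> real CARD('k) * K"
      using pos by (simp add: divide_le_eq mult.assoc)
  qed
qed

lemma contract:
  fixes C :: "real^'n^'k" and x :: "real^'n"
  assumes p: "1 \<le> p" and lt: "mat_pnorm p C < 1" and x: "x \<noteq> 0"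
  shows "vec_pnorm p (C *v x) < vec_pnorm p x"
proof -
  have "vec_pnorm p (C *v x) / vec_pnorm p x \<le> mat_pnorm p C"
    unfolding mat_pnorm_def by (rule cSup_upper) (use x ratio_bdd[OF p, of C] in auto)
  hence "vec_pnorm p (C *v x) / vec_pnorm p x < 1" using lt by simp
  thus ?thesis using vp_pos[OF p x] by (simp add: divide_less_eq)
qed



theorem corollary3p4:
  fixes A B M_B N_B :: "real^'n^'m" and b :: "real^'m" and p :: ereal
  assumes "CARD('m) < CARD('n)"
    and "1 \<le> p"
    and "B = M_B - N_B"
    and "rank M_B = CARD('m)"
    and "\<forall>i. (moore_penrose M_B *v b) $ i \<le> 0"
    and "\<forall>i j. (moore_penrose M_B ** (N_B + A)) $ i $ j \<ge> 0"
    and "mat_pnorm p (moore_penrose M_B ** (N_B + A)) < 1"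
  shows "\<exists>x :: real^'n. (\<forall>i. x $ i \<ge> 0) \<and> A *v x - B *v (\<chi> i. \<bar>x $ i\<bar>) = b"
proof -
  note p = assms(2)
  define P where "P = moore_penrose M_B"
  define C where "C = P ** (N_B + A)"
  define c where "c = - (P *v b)"
  have MP: "M_B ** P = mat 1" unfolding P_def
    by (rule mp_right_inverse) (use assms(4) full_rank_surjective in blast)
  have Cnn: "\<forall>i j. 0 \<le> C $ i $ j" using assms(6) unfolding C_def P_def by blast
  have cnn: "\<forall>i. 0 \<le> c $ i" using assms(5) unfolding c_def P_def by simp
  have lt: "mat_pnorm p C < 1" using assms(7) unfolding C_def P_def .
  have "\<forall>x. (mat 1 - C) *v x = 0 \<longrightarrow> x = 0"
  proof (intro allI impI)
    fix x :: "real^'n" assume "(mat 1 - C) *v x = 0"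
    hence "C *v x = x" by (simp add: matrix_vector_mult_diff_rdistrib)
    thus "x = 0" using contract[OF p lt, of x] by auto
  qed
  then obtain G where "G ** (mat 1 - C) = mat 1" using matrix_left_invertible_ker by blast
  hence "(mat 1 - C) ** G = mat 1" using matrix_left_right_inverse by blast
  hence "surj ((*v) (mat 1 - C))" using matrix_right_invertible_surjective by blast
  then obtain x where "(mat 1 - C) *v x = c" by (metis surjD)
  hence fx: "x = C *v x + c" by (simp add: matrix_vector_mult_diff_rdistrib algebra_simps)
  define y where "y = (\<chi> i. max 0 (- x $ i))"
  have y0: "0 \<le> y $ i" for i unfolding y_def by simp
  have le: "\<forall>i. \<bar>y $ i\<bar> \<le> \<bar>(C *v y) $ i\<bar>"
  proof
    fix i
    have Cy0: "0 \<le> (C *v y) $ i" unfolding mv_comp using Cnn y0 by (auto intro!: sum_nonneg)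
    have "- (C *v x) $ i = (\<Sum>j\<in>UNIV. C $ i $ j * (- x $ j))" unfolding mv_comp
      by (simp add: sum_negf)
    also have "\<dots> \<le> (C *v y) $ i" unfolding mv_comp
    proof (rule sum_mono)
      fix j show "C $ i $ j * (- x $ j) \<le> C $ i $ j * y $ j"
        by (rule mult_left_mono) (simp_all add: y_def Cnn)
    qed
    finally have h1: "- (C *v x) $ i \<le> (C *v y) $ i" .
    have xi: "x $ i = (C *v x) $ i + c $ i" using arg_cong[OF fx, of "\<lambda>v. v $ i"] by simp
    have "- x $ i \<le> (C *v y) $ i" using h1 xi cnn[rule_format, of i] by linarith
    hence "y $ i \<le> (C *v y) $ i" using Cy0 unfolding y_def by simp
    thus "\<bar>y $ i\<bar> \<le> \<bar>(C *v y) $ i\<bar>" using y0 Cy0 by simp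
  qed
  have "y = 0"
  proof (rule ccontr)
    assume "y \<noteq> 0"
    hence "vec_pnorm p (C *v y) < vec_pnorm p y" by (rule contract[OF p lt])
    moreover have "vec_pnorm p y \<le> vec_pnorm p (C *v y)" by (rule vp_mono[OF p le])
    ultimately show False by linarith
  qed
  have xnn: "\<forall>i. 0 \<le> x $ i"
  proof
    fix i have "y $ i = 0" using \<open>y = 0\<close> by simp
    thus "0 \<le> x $ i" unfolding y_def by simp
  qed
  have ax: "(\<chi> i. \<bar>x $ i\<bar>) = x" using xnn by (simp add: vec_eq_iff)
  have "M_B *v x = M_B *v (C *v x) + M_B *v c" using fx by (metis matrix_vector_right_distrib)
  also have "\<dots> = (N_B + A) *v x - b"
  proof -
    have "M_B *v (C *v x) = (N_B + A) *v x" unfolding C_def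
      by (simp add: matrix_vector_mul_assoc matrix_mul_assoc MP)
    moreover have "M_B *v c = - b"
    proof -
      have "c = 0 - P *v b" unfolding c_def by simp
      hence "M_B *v c = M_B *v 0 - M_B *v (P *v b)" by (simp only: matrix_vector_mult_diff_distrib)
      thus ?thesis by (simp add: matrix_vector_mul_assoc MP)
    qed
    ultimately show ?thesis by simp
  qed
  finally have Mx: "M_B *v x = (N_B + A) *v x - b" .
  have "A *v x - B *v x = b" unfolding assms(3)
    by (simp add: matrix_vector_mult_diff_rdistrib matrix_vector_mult_add_rdistrib Mx)
  thus ?thesis using xnn ax by metis
qed

end
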